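(* Let $d,r\ge2$. The map $\mathsf v_{d,r}(\mathbf u,\mathbf w)=(\mathbf w,\mathbf u+\langle\mathbf 1,\mathbf w\rangle\mathbf 1)$ restricts to a bijection $\mathbb M_{d,r}\to T_{r,d}$. Define $V:\mathcal M_{d,r}\to\mathrm{Sp}(\mathcal M_{r,d})$ by $V(\mathbf u,\mathbf w)=f_{\mathsf v_{d,r}(\mathbf u,\mathbf w)}$, and $W:\mathcal M_{r,d}\to\mathrm{Sp}(\mathcal M_{d,r})$ by $W(\mathbf y,\mathbf z)=f_{\mathsf v_{r,d}(\mathbf y,\mathbf z)}$ (using the identifications of elements with $\mathbb M_{d,r},\mathbb M_{r,d}$ and of points with $T_{d,r},T_{r,d}$). Then $V$ and $W$ are bijections, $V(m)(n)=W(n)(m)$ for all $m\in\mathcal M_{d,r}$, $n\in\mathcal M_{r,d}$ (explicitly, both equal $\langle\mathbf w,\mathbf y\rangle+\langle\mathbf u,\mathbf z\rangle+\langle\mathbf 1,\mathbf z\rangle\langle\mathbf 1,\mathbf w\rangle$ for $m=(\mathbf u,\mathbf w)$, $n=(\mathbf y,\mathbf z)$), and for each $k\in[d]$, $V^{-1}(\mathrm{Sp}(\mathcal M_{r,d},k))=\{(\mathbf u,\mathbf w)\in\mathbb M_{d,r}:u_k=0\}$, which is the set of elements of the maximal cone $\{u_k=\min_ju_j\}$ of $\Sigma(\mathcal M_{d,r})$ (in chart $M^{(1)}_{d,r}$); symmetrically for $W$. Hence $\mathcal M_{d,r}$ and $\mathcal M_{r,d}$ form a strict dual $\mathbb Z$-pair;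 in particular $\mathcal M_{d,d}$ is strictly self-dual.
   Context: The polyptych lattice $\mathcal M_{d,r}$ over $\mathbb Z$ (rank $d+r-1$): coordinates $(\mathbf u,\mathbf w)\in\mathbb Z^d\times\mathbb Z^r$; charts $M^{(i)}_{d,r}=\{(\mathbf u,\mathbf w):w_i=0\}$, $i\in[r]$; mutations $\mu_{i,i+1}(\mathbf u,\mathbf w)=(\mathbf u,w_1,\dots,w_{i-1},\min_ju_j-\sum_kw_k,0,w_{i+2},\dots,w_r)$, all others by composition/inversion. Elements of a polyptych lattice are classes of the disjoint union of charts under $m\sim\mu(m)$; its PL fan $\Sigma$ is the coarsest complete fan of cones on whose chart images all mutations are linear; for $\mathcal M_{d,r}$ its maximal cones are $\{u_k=\min\{u_1,\dots,u_d\}\}$, $k\in[d]$, in every chart. Points of a polyptych lattice with charts $M_\alpha$: $p$ with $p(m)+p(m')=\min_\alpha p(\pi_\alpha^{-1}(\pi_\alpha m+\pi_\alpha m'))$ and $p(\lambda m)=\lambda p(m)$; $\mathrm{Sp}(\mathcal M,\alpha)$ are those linear on chart $\alpha$. $\mathbf 1$ denotes the all-ones vector of the appropriate length; $\mathbb M_{d,r}=\{(\mathbf u,\mathbf w)\in\mathbb Z^d\times\mathbb Z^r:\min_ju_j=0\}$ is identified with the elements of $\mathcal M_{d,r}$ via $(\mathbf u,\mathbf w)\mapsto(\varphi_i(\mathbf u,\mathbf w))_i$, $\varphi_i(\mathbf u,\mathbf w)=(\mathbf u+\langle\mathbf 1,\mathbf w\rangle\mathbf 1,\mathbf w)$ with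 $i$-th $\mathbf w$-coordinate set to $0$. $T_{d,r}=\{(\mathbf a,\mathbf b)\in\mathbb Z^d\times\mathbb Z^r:\sum a_j=\min_ib_i\}$; $(\mathbf a,\mathbf b)\mapsto f_{\mathbf a,\mathbf b}$, $f_{\mathbf a,\mathbf b}(\mathbf u,\mathbf w)=\langle\mathbf a,\mathbf u\rangle+\langle\mathbf b,\mathbf w\rangle$ on $\mathbb M_{d,r}$, identifies $T_{d,r}$ with $\mathrm{Sp}(\mathcal M_{d,r})$, and $T_{d,r}(i)=\{\sum a_j=b_i\}$ with $\mathrm{Sp}(\mathcal M_{d,r},i)$. $\mathcal M_{r,d},\mathbb M_{r,d},T_{r,d},\mathsf v_{r,d}$ are defined the same way with $d,r$ swapped (coordinates $(\mathbf y,\mathbf z)\in\mathbb Z^r\times\mathbb Z^d$). A strict dual $\mathbb Z$-pair consists of maps $V:\mathcal M\to\mathrm{Sp}(\mathcal N)$, $W:\mathcal N\to\mathrm{Sp}(\mathcal M)$ that are bijections, satisfy $V(m)(n)=W(n)(m)$, and such that the preimages of the sets $\mathrm{Sp}(\cdot,\gamma)$ are exactly the maximal cones of the PL fan (on both sides). *)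

theory Defs
  imports Main
begin

text \<open>Concrete model of the polyptych lattice M_{d,r}.  Vectors in Z^n are
  int lists of length n; indices are 0-based (so [d] becomes {0..<d},
  and chart M^(1) is chart index 0).\<close>

definition ip :: "int list \<Rightarrow> int list \<Rightarrow> int" where
  "ip a u = sum_list (map2 (*) a u)"

definition MM :: "nat \<Rightarrow> nat \<Rightarrow> (int list \<times> int list) set" where
  "MM d r = {(u, w). length u = d \<and> length w = r \<and> Min (set u) = 0}"

definition chart_coord :: "nat \<Rightarrow> int list \<times> int list \<Rightarrow> int list \<times> int list" where
  "chart_coord i m = (map (\<lambda>x. x + sum_list (snd m)) (fst m), (snd m)[i := 0])"

definition TT :: "nat \<Rightarrow> nat \<Rightarrow> (int list \<times> int list) set" where
  "TT d r = {(a, b). length a = d \<and> length b = r \<and> sum_list a = Min (set b)}"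

definition TTi :: "nat \<Rightarrow> nat \<Rightarrow> nat \<Rightarrow> (int list \<times> int list) set" where
  "TTi d r i = {(a, b) \<in> TT d r. sum_list a = b ! i}"

definition fpt :: "int list \<times> int list \<Rightarrow> int list \<times> int list \<Rightarrow> int" where
  "fpt t m = ip (fst t) (fst m) + ip (snd t) (snd m)"

text \<open>The point f_t of M_{d,r}, as a function on (the model MM d r of) the elements
  (extended by 0 outside).\<close>
definition point :: "nat \<Rightarrow> nat \<Rightarrow> int list \<times> int list \<Rightarrow> (int list \<times> int list \<Rightarrow> int)" where
  "point d r t = (\<lambda>m. if m \<in> MM d r then fpt t m else 0)"

definition Sp :: "nat \<Rightarrow> nat \<Rightarrow> (int list \<times> int list \<Rightarrow> int) set" where
  "Sp d r = point d r ` TT d r"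

definition Spc :: "nat \<Rightarrow> nat \<Rightarrow> nat \<Rightarrow> (int list \<times> int list \<Rightarrow> int) set" where
  "Spc d r i = point d r ` TTi d r i"

definition vmap :: "int list \<times> int list \<Rightarrow> int list \<times> int list" where
  "vmap m = (snd m, map (\<lambda>x. x + sum_list (snd m)) (fst m))"

definition Vmap :: "nat \<Rightarrow> nat \<Rightarrow> int list \<times> int list \<Rightarrow> (int list \<times> int list \<Rightarrow> int)" where
  "Vmap d r m = point r d (vmap m)"

text \<open>Elements of the maximal cone {u_k = min_j u_j} of the PL fan of M_{d,r},
  read in chart M^(1) (index 0).\<close>
definition max_cone :: "nat \<Rightarrow> nat \<Rightarrow> nat \<Rightarrow> (int list \<times> int list) set" where
  "max_cone d r k = {m \<in> MM d r. fst (chart_coord 0 m) ! k = Min (set (fst (chart_coord 0 m)))}"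

text \<open>Strict dual Z-pair between M_{d,r} and M_{r,d}: the charts of M_{r,d} are
  indexed by [d], those of M_{d,r} by [r]; maximal cones of M_{d,r} by [d],
  those of M_{r,d} by [r].\<close>
definition strict_dual_pair ::
  "nat \<Rightarrow> nat \<Rightarrow> (int list \<times> int list \<Rightarrow> (int list \<times> int list \<Rightarrow> int))
       \<Rightarrow> (int list \<times> int list \<Rightarrow> (int list \<times> int list \<Rightarrow> int)) \<Rightarrow> bool" where
  "strict_dual_pair d r V W \<longleftrightarrow>
     bij_betw V (MM d r) (Sp r d) \<and> bij_betw W (MM r d) (Sp d r) \<and>
     (\<forall>m \<in> MM d r. \<forall>n \<in> MM r d. V m n = W n m) \<and>
     (\<lambda>\<gamma>. {m \<in> MM d r. V m \<in> Spc r d \<gamma>}) ` {..<d} = max_cone d r ` {..<d} \<and>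
     (\<lambda>\<gamma>. {n \<in> MM r d. W n \<in> Spc d r \<gamma>}) ` {..<r} = max_cone r d ` {..<r}"

end

theory Submission
  imports Defs
begin

lemma Min_map_add:
  assumes "u \<noteq> []"
  shows "Min (set (map (\<lambda>x. x + c) u)) = Min (set u) + (c::int)"
proof -
  have "(\<lambda>x. x + c) (Min (set u)) = Min ((\<lambda>x. x + c) ` set u)"
    by (rule mono_Min_commute) (use assms in \<open>auto simp: mono_def\<close>)
  then show ?thesis by simp
qed

lemma Min_img_add:
  assumes "u \<noteq> []"
  shows "Min ((\<lambda>x. x + c) ` set u) = Min (set u) + (c::int)"
  using Min_map_add[OF assms, of c] by simp

lemma unit_nth: "i < n \<Longrightarrow> ((replicate n (0::int))[k := 1]) ! i = (if i = k then 1 else 0)"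
  by (simp add: nth_list_update)


lemma ip_nth: "length a = length b \<Longrightarrow> ip a b = (\<Sum>i<length a. a!i * b!i)"
  unfolding ip_def by (simp add: sum_list_sum_nth atLeast0LessThan)

lemma sum_list_nth: "sum_list (a::int list) = (\<Sum>i<length a. a!i)"
  by (simp add: sum_list_sum_nth atLeast0LessThan)

lemma ip_shift_left: "length u = length z \<Longrightarrow>
  ip (map (\<lambda>x. x + c) u) z = ip u z + c * sum_list z"
  by (simp add: ip_nth sum_list_nth algebra_simps sum.distrib sum_distrib_left)

lemma ip_comm: "length a = length b \<Longrightarrow> ip a b = ip b a"
  by (simp add: ip_nth mult.commute)

lemma ip_shift: "length a = length z \<Longrightarrow>
  ip a (map (\<lambda>x. x + c) z) = ip a z + c * sum_list a"
  by (simp add: ip_nth sum_list_nth algebra_simps sum.distrib sum_distrib_left)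

lemma ip_unit: "length a = n \<Longrightarrow> k < n \<Longrightarrow> ip a ((replicate n 0)[k := 1]) = a ! k"
proof -
  assume h: "length a = n" "k < n"
  have "ip a ((replicate n 0)[k := 1]) = (\<Sum>i<n. a!i * (if i = k then 1 else 0))"
    using h by (simp add: ip_nth unit_nth)
  also have "\<dots> = (\<Sum>i<n. if i = k then a!i else 0)"
    by (rule sum.cong) auto
  also have "\<dots> = a!k" using h by simp
  finally show ?thesis .
qed

lemma ip_zero: "length a = n \<Longrightarrow> ip a (replicate n 0) = 0"
  by (simp add: ip_nth)

lemma point_inj:
  assumes r: "r \<ge> 2" and t: "(a,b) \<in> TT r d" and t': "(a',b') \<in> TT r d"
    and eq: "point r d (a,b) = point r d (a',b')"
  shows "(a,b) = (a',b')"
proof -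
  have L: "length a = r" "length b = d" "length a' = r" "length b' = d"
    using t t' by (auto simp: TT_def)
  have f: "fpt (a,b) m = fpt (a',b') m" if "m \<in> MM r d" for m
    using fun_cong[OF eq, of m] that by (simp add: point_def)
  have "a = a'"
  proof (rule nth_equalityI)
    show "length a = length a'" using L by simp
    fix i assume i: "i < length a"
    define y where "y = (replicate r 0)[i := (1::int)]"
    define j where "j = (if i = 0 then 1 else (0::nat))"
    have j: "j < r" "j \<noteq> i" using r unfolding j_def by auto
    have ly: "length y = r" by (simp add: y_def)
    have yj: "y ! j = 0" using j by (simp add: y_def unit_nth)
    have "0 \<in> set y" using nth_mem[of j y] j ly yj by simp
    moreover have "\<forall>x\<in>set y. x \<ge> 0"
    proof
      fix x assume "x \<in> set y"
      then obtain l where "l < length y" "y ! l = x" by (auto simp: in_set_conv_nth)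
      then show "x \<ge> 0" using ly by (simp add: y_def unit_nth split: if_splits)
    qed
    ultimately have "Min (set y) = 0" by (intro Min_eqI) auto
    hence "(y, replicate d 0) \<in> MM r d" by (simp add: MM_def y_def)
    from f[OF this] show "a ! i = a' ! i" using L i
      by (simp add: fpt_def y_def ip_unit ip_zero)
  qed
  moreover have "b = b'"
  proof (rule nth_equalityI)
    show "length b = length b'" using L by simp
    fix i assume i: "i < length b"
    have "r \<noteq> 0" using r by simp
    hence "Min (set (replicate r (0::int))) = 0" by simp
    hence "(replicate r 0, (replicate d 0)[i := 1]) \<in> MM r d" by (simp add: MM_def)
    from f[OF this] show "b ! i = b' ! i" using L i
      by (simp add: fpt_def ip_unit ip_zero)
  qed
  ultimately show ?thesis by simp
qed

lemma vmap_bij: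
  assumes "d \<ge> 2" "r \<ge> 2"
  shows "bij_betw vmap (MM d r) (TT r d)"
proof (rule bij_betw_byWitness[where f' = "\<lambda>(a,b). (map (\<lambda>x. x - sum_list a) b, a)"])
  show "\<forall>m\<in>MM d r. (\<lambda>(a,b). (map (\<lambda>x. x - sum_list a) b, a)) (vmap m) = m"
    by (auto simp: vmap_def comp_def)
  show "\<forall>t\<in>TT r d. vmap ((\<lambda>(a,b). (map (\<lambda>x. x - sum_list a) b, a)) t) = t"
    by (auto simp: vmap_def comp_def)
  show "vmap ` MM d r \<subseteq> TT r d"
  proof
    fix t assume "t \<in> vmap ` MM d r"
    then obtain u w where m: "(u,w) \<in> MM d r" "t = vmap (u,w)" by auto
    have "u \<noteq> []" using m assms by (auto simp: MM_def)
    then show "t \<in> TT r d" using m by (auto simp: MM_def TT_def vmap_def Min_img_add)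
  qed
  show "(\<lambda>(a,b). (map (\<lambda>x. x - sum_list a) b, a)) ` TT r d \<subseteq> MM d r"
  proof
    fix m assume "m \<in> (\<lambda>(a,b). (map (\<lambda>x. x - sum_list a) b, a)) ` TT r d"
    then obtain a b where t: "(a,b) \<in> TT r d" "m = (map (\<lambda>x. x - sum_list a) b, a)" by auto
    have "b \<noteq> []" using t assms by (auto simp: TT_def)
    from Min_map_add[OF this, of "- sum_list a"] t
    show "m \<in> MM d r" by (auto simp: MM_def TT_def Min_img_add)
  qed
qed

lemma Vmap_bij:
  assumes "d \<ge> 2" "r \<ge> 2"
  shows "bij_betw (Vmap d r) (MM d r) (Sp r d)"
proof -
  have "Vmap d r = point r d \<circ> vmap" by (rule ext) (simp add: Vmap_def)
  moreover have "bij_betw (point r d) (TT r d) (Sp r d)"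
    unfolding bij_betw_def Sp_def
    unfolding inj_on_def by (metis point_inj[OF assms(2)] prod.collapse)
  ultimately show ?thesis using bij_betw_trans[OF vmap_bij[OF assms]] by simp
qed

lemma Vmap_eval:
  assumes "(u, w) \<in> MM d r" "(y, z) \<in> MM r d"
  shows "Vmap d r (u, w) (y, z) = ip w y + ip u z + sum_list z * sum_list w"
proof -
  have L: "length u = length z" using assms by (simp add: MM_def)
  have "Vmap d r (u, w) (y, z) = ip w y + ip (map (\<lambda>x. x + sum_list w) u) z"
    using assms(2) by (simp add: Vmap_def point_def fpt_def vmap_def)
  also have "\<dots> = ip w y + ip u z + sum_list z * sum_list w"
    using L by (simp add: ip_shift_left mult.commute)
  finally show ?thesis .
qed

lemma Vmap_sym:
  assumes "(u, w) \<in> MM d r" "(y, z) \<in> MM r d"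
  shows "Vmap d r (u, w) (y, z) = Vmap r d (y, z) (u, w)"
  using assms Vmap_eval[OF assms] Vmap_eval[OF assms(2,1)]
  by (auto simp: MM_def ip_comm[of w y] ip_comm[of u z])

lemma cone1:
  assumes "d \<ge> 2" "r \<ge> 2" "k < d"
  shows "{m \<in> MM d r. Vmap d r m \<in> Spc r d k} = {(u, w) \<in> MM d r. u ! k = 0}"
proof -
  have "Vmap d r (u,w) \<in> Spc r d k \<longleftrightarrow> u ! k = 0" if m: "(u,w) \<in> MM d r" for u w
  proof
    have vt: "vmap (u,w) \<in> TT r d" using vmap_bij[OF assms(1,2)] m by (auto simp: bij_betw_def)
    assume "Vmap d r (u,w) \<in> Spc r d k"
    then obtain t where t: "t \<in> TTi r d k" "point r d (vmap (u,w)) = point r d t"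
      by (auto simp: Spc_def Vmap_def)
    have "t \<in> TT r d" using t by (auto simp: TTi_def)
    hence "vmap (u,w) = t" using point_inj[OF assms(2)] vt t(2)
      by (metis prod.collapse)
    thus "u ! k = 0" using t(1) m assms(3) by (auto simp: TTi_def vmap_def MM_def)
  next
    assume "u ! k = 0"
    moreover have vt: "vmap (u,w) \<in> TT r d" using vmap_bij[OF assms(1,2)] m by (auto simp: bij_betw_def)
    ultimately have "vmap (u,w) \<in> TTi r d k" using m assms(3)
      by (auto simp: TTi_def vmap_def MM_def)
    thus "Vmap d r (u,w) \<in> Spc r d k" unfolding Spc_def Vmap_def by (rule imageI)
  qed
  note * = this
  show ?thesis
  proof (rule set_eqI)
    fix m show "m \<in> {m \<in> MM d r. Vmap d r m \<in> Spc r d k} \<longleftrightarrow> m \<in> {(u, w) \<in> MM d r. u ! k = 0}"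
      using * by (cases m) blast
  qed
qed

lemma cone2:
  assumes "d \<ge> 2" "k < d"
  shows "{(u, w) \<in> MM d r. u ! k = 0} = max_cone d r k"
proof -
  have "u ! k = 0 \<longleftrightarrow> map (\<lambda>x. x + sum_list w) u ! k = Min (set (map (\<lambda>x. x + sum_list w) u))"
    if m: "(u,w) \<in> MM d r" for u w
  proof -
    have "u \<noteq> []" "Min (set u) = 0" "k < length u" using m assms by (auto simp: MM_def)
    from Min_map_add[OF this(1), of "sum_list w"] this show ?thesis by simp
  qed
  note * = this
  show ?thesis
  proof (rule set_eqI)
    fix m show "m \<in> {(u, w) \<in> MM d r. u ! k = 0} \<longleftrightarrow> m \<in> max_cone d r k"
    proof (cases m)
      case (Pair u w)
      have "m \<in> max_cone d r k \<longleftrightarrow> (u,w) \<in> MM d r \<and>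
          map (\<lambda>x. x + sum_list w) u ! k = Min (set (map (\<lambda>x. x + sum_list w) u))"
        unfolding max_cone_def chart_coord_def Pair by simp
      then show ?thesis using *[of u w] Pair by blast
    qed
  qed
qed

lemma all_facts:
  assumes "d \<ge> 2" "r \<ge> 2"
  shows "strict_dual_pair d r (Vmap d r) (Vmap r d)"
  unfolding strict_dual_pair_def
proof (intro conjI)
  show "bij_betw (Vmap d r) (MM d r) (Sp r d)" by (rule Vmap_bij[OF assms])
  show "bij_betw (Vmap r d) (MM r d) (Sp d r)" by (rule Vmap_bij[OF assms(2,1)])
  show "\<forall>m\<in>MM d r. \<forall>n\<in>MM r d. Vmap d r m n = Vmap r d n m"
    using Vmap_sym by fast
  show "(\<lambda>\<gamma>. {m \<in> MM d r. Vmap d r m \<in> Spc r d \<gamma>}) ` {..<d} = max_cone d r ` {..<d}"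
  proof (rule image_cong[OF refl])
    fix x assume "x \<in> {..<d}"
    then have x: "x < d" by simp
    show "{m \<in> MM d r. Vmap d r m \<in> Spc r d x} = max_cone d r x"
      using cone1[OF assms x] cone2[OF assms(1) x] by (rule trans)
  qed
  show "(\<lambda>\<gamma>. {n \<in> MM r d. Vmap r d n \<in> Spc d r \<gamma>}) ` {..<r} = max_cone r d ` {..<r}"
  proof (rule image_cong[OF refl])
    fix x assume "x \<in> {..<r}"
    then have x: "x < r" by simp
    show "{n \<in> MM r d. Vmap r d n \<in> Spc d r x} = max_cone r d x"
      using cone1[OF assms(2,1) x] cone2[OF assms(2) x] by (rule trans)
  qed
qed

theorem mainTheorem17:
  fixes d r :: nat
  assumes "d \<ge> 2" and "r \<ge> 2"
  shows "bij_betw vmap (MM d r) (TT r d) \<and>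
         bij_betw (Vmap d r) (MM d r) (Sp r d) \<and>
         bij_betw (Vmap r d) (MM r d) (Sp d r) \<and>
         (\<forall>u w y z. (u, w) \<in> MM d r \<longrightarrow> (y, z) \<in> MM r d \<longrightarrow>
              Vmap d r (u, w) (y, z) = Vmap r d (y, z) (u, w) \<and>
              Vmap d r (u, w) (y, z) = ip w y + ip u z + sum_list z * sum_list w) \<and>
         (\<forall>k < d. {m \<in> MM d r. Vmap d r m \<in> Spc r d k} = {(u, w) \<in> MM d r. u ! k = 0} \<and>
                  {(u, w) \<in> MM d r. u ! k = 0} = max_cone d r k) \<and>
         (\<forall>k < r. {n \<in> MM r d. Vmap r d n \<in> Spc d r k} = {(y, z) \<in> MM r d. y ! k = 0} \<and>
                  {(y, z) \<in> MM r d. y ! k = 0} = max_cone r d k) \<and>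
         strict_dual_pair d r (Vmap d r) (Vmap r d) \<and>
         strict_dual_pair d d (Vmap d d) (Vmap d d)"
proof (intro conjI allI impI)
  show "bij_betw vmap (MM d r) (TT r d)" by (rule vmap_bij[OF assms])
  show "bij_betw (Vmap d r) (MM d r) (Sp r d)" by (rule Vmap_bij[OF assms])
  show "bij_betw (Vmap r d) (MM r d) (Sp d r)" by (rule Vmap_bij[OF assms(2,1)])
  fix u w y z assume h: "(u, w) \<in> MM d r" "(y, z) \<in> MM r d"
  show "Vmap d r (u, w) (y, z) = Vmap r d (y, z) (u, w)" by (rule Vmap_sym[OF h])
  show "Vmap d r (u, w) (y, z) = ip w y + ip u z + sum_list z * sum_list w" by (rule Vmap_eval[OF h])
next
  fix k :: nat assume k: "k < d"
  show "{m \<in> MM d r. Vmap d r m \<in> Spc r d k} = {(u, w) \<in> MM d r. u ! k = 0}"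
    by (rule cone1[OF assms k])
  show "{(u, w) \<in> MM d r. u ! k = 0} = max_cone d r k" by (rule cone2[OF assms(1) k])
next
  fix k :: nat assume k: "k < r"
  show "{n \<in> MM r d. Vmap r d n \<in> Spc d r k} = {(y, z) \<in> MM r d. y ! k = 0}"
    by (rule cone1[OF assms(2,1) k])
  show "{(y, z) \<in> MM r d. y ! k = 0} = max_cone r d k" by (rule cone2[OF assms(2) k])
next
  show "strict_dual_pair d r (Vmap d r) (Vmap r d)" by (rule all_facts[OF assms])
  show "strict_dual_pair d d (Vmap d d) (Vmap d d)" by (rule all_facts[OF assms(1,1)])
qed

end
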